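(* Let $V$ be a finite-dimensional real vector space, regarded as an additive group, and let $S,T\subset V$. If the asymptotic cones satisfy $S\infty\cap T\infty=\{0\}$, then $S\pitchfork T$ in $V$.
   Context: The asymptotic cone $S\infty$ of a subset $S\subset V$ is the closed cone consisting of all limits $\lim_{n\to\infty}\varepsilon_n x_n$ with $x_n\in S$ and $\varepsilon_n>0$, $\varepsilon_n\to 0$. For subsets $S,T$ of the additive group $V$, $S\pitchfork T$ means that for every compact subset $C\subset V$ the set $S\cap (C+T+C)$ is relatively compact, where $C+T+C=\{a+x+b:a,b\in C,\ x\in T\}$. *)

theory Defs
  imports "HOL-Analysis.Analysis"
begin

definition asymptotic_cone :: "'a::real_normed_vector set \<Rightarrow> 'a set" where
  "asymptotic_cone S = {v. \<exists>x eps. (\<forall>n. x n \<in> S) \<and> (\<forall>n. eps n > (0::real)) \<and>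
       eps \<longlonglongrightarrow> 0 \<and> (\<lambda>n. eps n *\<^sub>R x n) \<longlonglongrightarrow> v}"

definition pitchfork :: "'a::{ab_group_add,topological_space} set \<Rightarrow> 'a set \<Rightarrow> bool" where
  "pitchfork S T \<longleftrightarrow> (\<forall>C. compact C \<longrightarrow>
      compact (closure (S \<inter> {a + x + b | a x b. a \<in> C \<and> x \<in> T \<and> b \<in> C})))"

end

theory Submission
  imports Defs
begin

theorem lemma7p3:
  fixes S T :: "'a::euclidean_space set"
  assumes "asymptotic_cone S \<inter> asymptotic_cone T = {0}"
  shows "pitchfork S T"
  unfolding pitchfork_def
proof (intro allI impI)
  fix C :: "'a set"
  assume cC: "compact C"
  then obtain B where B: "\<And>c. c \<in> C \<Longrightarrow> norm c \<le> B"
    using compact_imp_bounded bounded_iff by metis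
  define A where "A = S \<inter> {a + x + b | a x b. a \<in> C \<and> x \<in> T \<and> b \<in> C}"
  have "bounded A"
  proof (rule ccontr)
    assume nb: "\<not> bounded A"
    have "\<forall>n::nat. \<exists>a t b. a \<in> C \<and> t \<in> T \<and> b \<in> C \<and> a + t + b \<in> S \<and> norm (a + t + b) > real (Suc n)"
    proof
      fix n :: nat
      from nb obtain x where "x \<in> A" "norm x > real (Suc n)"
        unfolding bounded_iff by (meson not_le)
      then show "\<exists>a t b. a \<in> C \<and> t \<in> T \<and> b \<in> C \<and> a + t + b \<in> S \<and> norm (a + t + b) > real (Suc n)"
        unfolding A_def by blast
    qed
    then obtain a t b where abt: "\<And>n. a n \<in> C" "\<And>n. t n \<in> T" "\<And>n. b n \<in> C"
      "\<And>n. a n + t n + b n \<in> S" "\<And>n. norm (a n + t n + b n) > real (Suc n)"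
      by metis
    define x where "x n = a n + t n + b n" for n
    define eps where "eps n = 1 / norm (x n)" for n
    have xpos: "norm (x n) > 0" for n using abt(5)[of n] unfolding x_def by linarith
    have epspos: "eps n > 0" for n using xpos[of n] unfolding eps_def by simp
    have epsle: "eps n \<le> inverse (real (Suc n))" for n
    proof -
      have "real (Suc n) \<le> norm (x n)" using abt(5)[of n] unfolding x_def by linarith
      then show ?thesis unfolding eps_def
        by (simp add: divide_inverse le_imp_inverse_le)
    qed
    have eps0: "eps \<longlonglongrightarrow> 0"
      by (rule real_tendsto_sandwich[where f="\<lambda>_. 0" and h="\<lambda>n. inverse (real (Suc n))"])
         (use epspos epsle LIMSEQ_inverse_real_of_nat in \<open>auto intro: less_imp_le always_eventually\<close>)
    define y where "y n = eps n *\<^sub>R x n" for n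
    have ys: "y n \<in> sphere 0 1" for n
      using xpos[of n] unfolding y_def eps_def by simp
    obtain l r where l: "l \<in> sphere 0 1" and r: "strict_mono r" and lim: "(y \<circ> r) \<longlonglongrightarrow> l"
      using compact_sphere[of "0::'a" 1] ys unfolding compact_eq_seq_compact_metric seq_compact_def
      by metis
    have eps0r: "(eps \<circ> r) \<longlonglongrightarrow> 0" using LIMSEQ_subseq_LIMSEQ[OF eps0 r] .
    have lS: "l \<in> asymptotic_cone S"
      unfolding asymptotic_cone_def
      apply (rule CollectI)
      apply (rule exI[of _ "x \<circ> r"], rule exI[of _ "eps \<circ> r"])
      using abt(4) epspos eps0r lim unfolding x_def y_def by (auto simp: comp_def)
    have small: "(\<lambda>n. eps (r n) *\<^sub>R (a (r n) + b (r n))) \<longlonglongrightarrow> 0"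
    proof (rule Lim_null_comparison)
      show "\<forall>\<^sub>F n in sequentially. norm (eps (r n) *\<^sub>R (a (r n) + b (r n))) \<le> eps (r n) * (2 * B)"
      proof (intro always_eventually allI)
        fix n
        have "norm (a (r n) + b (r n)) \<le> 2 * B"
          using B[OF abt(1)] B[OF abt(3)] norm_triangle_ineq[of "a (r n)" "b (r n)"] by smt
        then show "norm (eps (r n) *\<^sub>R (a (r n) + b (r n))) \<le> eps (r n) * (2 * B)"
          using epspos[of "r n"] by (simp add: mult_left_mono)
      qed
      show "(\<lambda>n. eps (r n) * (2 * B)) \<longlonglongrightarrow> 0"
        using tendsto_mult_left_zero[OF eps0r, of "2*B"] by (simp add: comp_def mult.commute)
    qed
    have eqt: "eps (r n) *\<^sub>R t (r n) = (y \<circ> r) n - eps (r n) *\<^sub>R (a (r n) + b (r n))" for n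
      unfolding y_def x_def by (simp add: algebra_simps)
    have limt: "(\<lambda>n. eps (r n) *\<^sub>R t (r n)) \<longlonglongrightarrow> l"
      unfolding eqt using tendsto_diff[OF lim small] by simp
    have lT: "l \<in> asymptotic_cone T"
      unfolding asymptotic_cone_def
      apply (rule CollectI)
      apply (rule exI[of _ "t \<circ> r"], rule exI[of _ "eps \<circ> r"])
      using abt(2) epspos eps0r limt by (auto simp: comp_def)
    from lS lT assms have "l = 0" by blast
    with l show False by simp
  qed
  then show "compact (closure A)" by (simp add: compact_closure)
qed

end
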